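(* Let $(P,Q)$ be a quasi-projection pair on a Hilbert $C^*$-module $H$, and let $H_5=\overline{\mathcal{R}(PQ(I-P))}$ and $H_6=\overline{\mathcal{R}((I-P)QP)}$. Then the following are equivalent: (i) $Q=Q^*$; (ii) $H_5=\{0\}$; (iii) $H_6=\{0\}$.
   Context: $H$ is a Hilbert module over a $C^*$-algebra, $\mathcal{L}(H)$ the adjointable operators. A quasi-projection pair is $(P,Q)$ with $P\in\mathcal{L}(H)$ a projection (self-adjoint idempotent), $Q\in\mathcal{L}(H)$ an idempotent, such that $PQ^*P=PQP$, $PQ^*(I-P)=-PQ(I-P)$, $(I-P)Q^*(I-P)=(I-P)Q(I-P)$; equivalently $Q^*=(2P-I)Q(2P-I)$. *)

theory Defs
  imports "HOL-Analysis.Analysis"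
begin

text \<open>A C*-algebra: a real Banach algebra (not necessarily unital) together with a
complex scalar multiplication sc extending the real one, and an involution st
satisfying the C*-identity.\<close>

definition cstar_algebra ::
  "(complex \<Rightarrow> 'a::{banach,real_normed_algebra} \<Rightarrow> 'a) \<Rightarrow> ('a \<Rightarrow> 'a) \<Rightarrow> bool" where
  "cstar_algebra sc st \<longleftrightarrow>
     (\<forall>r x. sc (complex_of_real r) x = r *\<^sub>R x) \<and>
     (\<forall>c x y. sc c (x + y) = sc c x + sc c y) \<and>
     (\<forall>c d x. sc (c + d) x = sc c x + sc d x) \<and>
     (\<forall>c d x. sc (c * d) x = sc c (sc d x)) \<and>
     (\<forall>c x. norm (sc c x) = cmod c * norm x) \<and>
     (\<forall>c x y. sc c (x * y) = sc c x * y \<and> sc c (x * y) = x * sc c y) \<and>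
     (\<forall>x. st (st x) = x) \<and>
     (\<forall>x y. st (x + y) = st x + st y) \<and>
     (\<forall>c x. st (sc c x) = sc (cnj c) (st x)) \<and>
     (\<forall>x y. st (x * y) = st y * st x) \<and>
     (\<forall>x. norm (st x * x) = (norm x)\<^sup>2)"

text \<open>A (right) Hilbert C*-module over the C*-algebra (sc, st): a complex vector space
(scalar multiplication smH) with a right action act of the algebra and an algebra-valued
inner product ip, linear in the second variable, whose norm is the one induced by ip and
which is complete (class banach).\<close>

definition hilbert_cstar_module ::
  "(complex \<Rightarrow> 'a::{banach,real_normed_algebra} \<Rightarrow> 'a) \<Rightarrow> ('a \<Rightarrow> 'a) \<Rightarrow>
   (complex \<Rightarrow> 'm::banach \<Rightarrow> 'm) \<Rightarrow> ('m \<Rightarrow> 'a \<Rightarrow> 'm) \<Rightarrow> ('m \<Rightarrow> 'm \<Rightarrow> 'a) \<Rightarrow> bool" where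
  "hilbert_cstar_module sc st smH act ip \<longleftrightarrow>
     cstar_algebra sc st \<and>
     (\<forall>r x. smH (complex_of_real r) x = r *\<^sub>R x) \<and>
     (\<forall>c x y. smH c (x + y) = smH c x + smH c y) \<and>
     (\<forall>c d x. smH (c + d) x = smH c x + smH d x) \<and>
     (\<forall>c d x. smH (c * d) x = smH c (smH d x)) \<and>
     (\<forall>x y a. act (x + y) a = act x a + act y a) \<and>
     (\<forall>x a b. act x (a + b) = act x a + act x b) \<and>
     (\<forall>x a b. act (act x a) b = act x (a * b)) \<and>
     (\<forall>c x a. smH c (act x a) = act (smH c x) a \<and> smH c (act x a) = act x (sc c a)) \<and>
     (\<forall>x y z. ip x (y + z) = ip x y + ip x z) \<and>
     (\<forall>c x y. ip x (smH c y) = sc c (ip x y)) \<and>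
     (\<forall>x y a. ip x (act y a) = ip x y * a) \<and>
     (\<forall>x y. ip y x = st (ip x y)) \<and>
     (\<forall>x. \<exists>b. ip x x = st b * b) \<and>
     (\<forall>x. ip x x = 0 \<longrightarrow> x = 0) \<and>
     (\<forall>x. norm x = sqrt (norm (ip x x)))"

definition adjointable :: "('m \<Rightarrow> 'm \<Rightarrow> 'a) \<Rightarrow> ('m \<Rightarrow> 'm) \<Rightarrow> bool" where
  "adjointable ip T \<longleftrightarrow> (\<exists>S. \<forall>x y. ip (T x) y = ip x (S y))"

definition adjoint :: "('m \<Rightarrow> 'm \<Rightarrow> 'a) \<Rightarrow> ('m \<Rightarrow> 'm) \<Rightarrow> ('m \<Rightarrow> 'm)" where
  "adjoint ip T = (SOME S. \<forall>x y. ip (T x) y = ip x (S y))"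

definition is_projection :: "('m \<Rightarrow> 'm \<Rightarrow> 'a) \<Rightarrow> ('m \<Rightarrow> 'm) \<Rightarrow> bool" where
  "is_projection ip P \<longleftrightarrow> adjointable ip P \<and> P \<circ> P = P \<and> adjoint ip P = P"

definition is_idempotent :: "('m \<Rightarrow> 'm \<Rightarrow> 'a) \<Rightarrow> ('m \<Rightarrow> 'm) \<Rightarrow> bool" where
  "is_idempotent ip Q \<longleftrightarrow> adjointable ip Q \<and> Q \<circ> Q = Q"

definition quasi_projection_pair ::
  "('m::ab_group_add \<Rightarrow> 'm \<Rightarrow> 'a) \<Rightarrow> ('m \<Rightarrow> 'm) \<Rightarrow> ('m \<Rightarrow> 'm) \<Rightarrow> bool" where
  "quasi_projection_pair ip P Q \<longleftrightarrow>
     is_projection ip P \<and> is_idempotent ip Q \<and>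
     (let Qs = adjoint ip Q; J = (\<lambda>x. x - P x) in
        P \<circ> Qs \<circ> P = P \<circ> Q \<circ> P \<and>
        P \<circ> Qs \<circ> J = (\<lambda>x. - P (Q (J x))) \<and>
        J \<circ> Qs \<circ> J = J \<circ> Q \<circ> J)"

end

theory Submission
  imports Defs
begin

locale ipctx =
  fixes ip :: "'m::real_vector \<Rightarrow> 'm \<Rightarrow> 'a::ab_group_add" and st :: "'a \<Rightarrow> 'a"
  assumes add2: "\<And>x y z. ip x (y+z) = ip x y + ip x z"
    and sym: "\<And>x y. ip y x = st (ip x y)"
    and stst: "\<And>a. st (st a) = a"
    and stadd: "\<And>a b. st (a+b) = st a + st b"
    and nondeg: "\<And>x. ip x x = 0 \<Longrightarrow> x = 0"
begin

lemma add1: "ip (x+y) z = ip x z + ip y z"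
  by (metis sym add2 stadd)

lemma zero2: "ip x 0 = 0"
  using add2[of x 0 0] by simp

lemma zero1: "ip 0 x = 0"
  using add1[of 0 0 x] by simp

lemma diff2: "ip x (y - z) = ip x y - ip x z"
  using add2[of x "y - z" z] by (simp add: algebra_simps)

lemma diff1: "ip (y - z) x = ip y x - ip z x"
  using add1[of "y - z" z x] by (simp add: algebra_simps)

lemma neg2: "ip x (- y) = - ip x y"
  using diff2[of x 0 y] zero2 by simp

lemma neg1: "ip (- y) x = - ip y x"
  using diff1[of 0 y x] zero1 by simp

lemma ext_eq: assumes "\<And>z. ip z u = ip z v" shows "u = v"
proof -
  have "ip (u - v) (u - v) = 0" using assms diff2 by simp
  then show ?thesis using nondeg by fastforce
qed

lemma adj_rev: assumes "\<And>x y. ip (T x) y = ip x (S y)" shows "ip (S x) y = ip x (T y)"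
  by (metis assms sym stst)

lemma adj_add: assumes "\<And>x y. ip (T x) y = ip x (S y)" shows "S (a + b) = S a + S b"
  by (rule ext_eq) (simp add: assms[symmetric] add2)

lemma adj_diff: assumes "\<And>x y. ip (T x) y = ip x (S y)" shows "S (a - b) = S a - S b"
  by (rule ext_eq) (simp add: assms[symmetric] diff2)

lemma main:
  fixes P Q Qs :: "'m \<Rightarrow> 'm"
  assumes adjP: "\<And>x y. ip (P x) y = ip x (P y)"
    and adjQ: "\<And>x y. ip (Q x) y = ip x (Qs y)"
    and PP: "\<And>x. P (P x) = P x"
    and c0: "\<And>x. P (Qs (P x)) = P (Q (P x))"
    and c1: "\<And>x. P (Qs (x - P x)) = - P (Q (x - P x))"
    and c2: "\<And>x. (Qs (x - P x)) - P (Qs (x - P x)) = Q (x - P x) - P (Q (x - P x))"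
  shows "(Q = Qs \<longleftrightarrow> (\<forall>x. P (Q (x - P x)) = 0)) \<and> (Q = Qs \<longleftrightarrow> (\<forall>x. Q (P x) - P (Q (P x)) = 0))"
proof -
  have adjQ': "\<And>x y. ip (Qs x) y = ip x (Q y)" using adj_rev adjQ by blast
  have Padd: "\<And>a b. P (a - b) = P a - P b" using adj_diff adjP by blast
  have Qadd: "\<And>a b. Q (a - b) = Q a - Q b" using adj_diff adjQ' by blast
  have Qsadd: "\<And>a b. Qs (a - b) = Qs a - Qs b" using adj_diff adjQ by blast
  have PJ: "\<And>x. P (x - P x) = 0" using Padd PP by simp
  have adjJ: "\<And>a b. ip (a - P a) b = ip a (b - P b)" using diff1 diff2 adjP by simp
  have c3: "\<And>v. Qs (P v) - P (Qs (P v)) = - (Q (P v) - P (Q (P v)))"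
  proof -
    fix v
    show "Qs (P v) - P (Qs (P v)) = - (Q (P v) - P (Q (P v)))"
    proof (rule ext_eq)
      fix z
      have "ip z (Qs (P v) - P (Qs (P v))) = ip (z - P z) (Qs (P v))" using adjJ by simp
      also have "\<dots> = ip (Q (z - P z)) (P v)" using adjQ by simp
      also have "\<dots> = ip (P (Q (z - P z))) v" using adjP by simp
      also have "\<dots> = - ip (P (Qs (z - P z))) v" using c1 neg1 by simp
      also have "\<dots> = - ip (Qs (z - P z)) (P v)" using adjP by simp
      also have "\<dots> = - ip (z - P z) (Q (P v))" using adjQ' by simp
      also have "\<dots> = - ip z (Q (P v) - P (Q (P v)))" using adjJ by simp
      also have "\<dots> = ip z (- (Q (P v) - P (Q (P v))))" by (rule neg2[symmetric])
      finally show "ip z (Qs (P v) - P (Qs (P v))) = ip z (- (Q (P v) - P (Q (P v))))" .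
    qed
  qed
  have two: "\<And>u::'m. u = - u \<Longrightarrow> u = 0"
  proof -
    fix u :: 'm assume "u = - u"
    then have "u + u = 0" by (metis add.right_inverse)
    then have "(2::real) *\<^sub>R u = 0" by (simp add: scaleR_2)
    then show "u = 0" by simp
  qed
  have A: "(\<forall>x. P (Q (x - P x)) = 0) \<longleftrightarrow> (\<forall>x. Q (P x) - P (Q (P x)) = 0)"
  proof
    assume h: "\<forall>x. P (Q (x - P x)) = 0"
    show "\<forall>x. Q (P x) - P (Q (P x)) = 0"
    proof
      fix y
      let ?w = "Q (P y) - P (Q (P y))"
      have Pw: "P ?w = 0" using Padd PP by simp
      have "ip ?w ?w = ip ?w (Q (P y)) - ip ?w (P (Q (P y)))" using diff2 by simp
      also have "ip ?w (P (Q (P y))) = 0" using adjP[of ?w] Pw zero1 by simp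
      also have "ip ?w (Q (P y)) = ip (Qs ?w) (P y)" using adjQ' by simp
      also have "\<dots> = ip (P (Qs ?w)) y" using adjP by simp
      also have "P (Qs ?w) = 0" using c1[of "Q (P y)"] h by simp
      finally have "ip ?w ?w = 0" using zero1 by simp
      then show "?w = 0" using nondeg by blast
    qed
  next
    assume h: "\<forall>x. Q (P x) - P (Q (P x)) = 0"
    show "\<forall>x. P (Q (x - P x)) = 0"
    proof
      fix x
      let ?u = "P (Q (x - P x))"
      have Pu: "P ?u = ?u" using PP by simp
      have hs: "Qs ?u = P (Qs ?u)" using c3[of "Q (x - P x)"] h Pu by simp
      have "ip ?u ?u = ip (Q (x - P x)) ?u" using adjP[of "Q (x - P x)" ?u] Pu by simp
      also have "\<dots> = ip (x - P x) (Qs ?u)" using adjQ by simp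
      also have "\<dots> = ip (P (x - P x)) (Qs ?u)" using adjP[of "x - P x" "Qs ?u"] hs[symmetric] by simp
      also have "\<dots> = 0" using PJ zero1 by simp
      finally show "?u = 0" using nondeg by blast
    qed
  qed
  have B: "Q = Qs \<longleftrightarrow> (\<forall>x. P (Q (x - P x)) = 0)"
  proof
    assume "Q = Qs"
    then show "\<forall>x. P (Q (x - P x)) = 0" using c1 two by simp
  next
    assume h: "\<forall>x. P (Q (x - P x)) = 0"
    then have h2: "\<forall>x. Q (P x) - P (Q (P x)) = 0" using A by blast
    show "Q = Qs"
    proof
      fix x
      have d: "\<And>v. v = P v + (v - P v)" by simp
      have e1: "Qs (P x) = Q (P x)" using c3[of x] h2 c0[of x] d[of "Qs (P x)"] d[of "Q (P x)"] by simp
      have e2: "Qs (x - P x) = Q (x - P x)" using c1[of x] c2[of x] h d[of "Qs (x - P x)"] d[of "Q (x - P x)"] by simp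
      have "Q x = Q (P x) + Q (x - P x)" using Qadd[of x "P x"] by simp
      also have "\<dots> = Qs (P x) + Qs (x - P x)" using e1 e2 by simp
      also have "\<dots> = Qs x" using Qsadd[of x "P x"] by simp
      finally show "Q x = Qs x" .
    qed
  qed
  show ?thesis using A B by blast
qed

end

lemma adjoint_prop: assumes "adjointable ip T" shows "ip (T x) y = ip x (adjoint ip T y)"
proof -
  have "\<forall>x y. ip (T x) y = ip x (adjoint ip T y)"
    using assms unfolding adjointable_def adjoint_def by (rule someI_ex)
  then show ?thesis by blast
qed

lemma closure_zero: "closure (range f) = {0::'b::{t1_space,zero}} \<longleftrightarrow> (\<forall>x. f x = 0)"
proof
  assume h: "closure (range f) = {0}"
  show "\<forall>x. f x = 0"
    using closure_subset[of "range f"] h by auto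
next
  assume "\<forall>x. f x = 0"
  then have "range f = {0}" by auto
  then show "closure (range f) = {0}" by simp
qed

theorem lemma2p12:
  fixes sc :: "complex \<Rightarrow> 'a::{banach,real_normed_algebra} \<Rightarrow> 'a"
    and st :: "'a \<Rightarrow> 'a"
    and smH :: "complex \<Rightarrow> 'm::banach \<Rightarrow> 'm"
    and act :: "'m \<Rightarrow> 'a \<Rightarrow> 'm"
    and ip :: "'m \<Rightarrow> 'm \<Rightarrow> 'a"
    and P Q :: "'m \<Rightarrow> 'm"
  assumes "hilbert_cstar_module sc st smH act ip"
    and "quasi_projection_pair ip P Q"
  shows "(Q = adjoint ip Q \<longleftrightarrow> closure (range (\<lambda>x. P (Q (x - P x)))) = {0})
       \<and> (Q = adjoint ip Q \<longleftrightarrow> closure (range (\<lambda>x. Q (P x) - P (Q (P x)))) = {0})"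
proof -
  have H1: "cstar_algebra sc st"
    using assms(1) unfolding hilbert_cstar_module_def by (elim conjE) assumption
  have H2: "\<forall>x y z. ip x (y + z) = ip x y + ip x z"
    using assms(1) unfolding hilbert_cstar_module_def by (elim conjE) assumption
  have H3: "\<forall>x y. ip y x = st (ip x y)"
    using assms(1) unfolding hilbert_cstar_module_def by (elim conjE) assumption
  have H4: "\<forall>x. ip x x = 0 \<longrightarrow> x = 0"
    using assms(1) unfolding hilbert_cstar_module_def by (elim conjE) assumption
  have S1: "\<forall>x. st (st x) = x"
    using H1 unfolding cstar_algebra_def by (elim conjE) assumption
  have S2: "\<forall>x y. st (x + y) = st x + st y"
    using H1 unfolding cstar_algebra_def by (elim conjE) assumption
  note H = H1 H2[rule_format] H3[rule_format] H4[rule_format]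
  note S = S1[rule_format] S2[rule_format]
  interpret ipctx ip st
    by unfold_locales (fact H(2), fact H(3), fact S(1), fact S(2), fact H(4))
  have Q1: "is_projection ip P"
    using assms(2) unfolding quasi_projection_pair_def Let_def by (elim conjE) assumption
  have Q2: "is_idempotent ip Q"
    using assms(2) unfolding quasi_projection_pair_def Let_def by (elim conjE) assumption
  have Q3: "P \<circ> adjoint ip Q \<circ> P = P \<circ> Q \<circ> P"
    using assms(2) unfolding quasi_projection_pair_def Let_def by (elim conjE) assumption
  have Q4: "P \<circ> adjoint ip Q \<circ> (\<lambda>x. x - P x) = (\<lambda>x. - P (Q (x - P x)))"
    using assms(2) unfolding quasi_projection_pair_def Let_def by (elim conjE) assumption
  have Q5: "(\<lambda>x. x - P x) \<circ> adjoint ip Q \<circ> (\<lambda>x. x - P x) = (\<lambda>x. x - P x) \<circ> Q \<circ> (\<lambda>x. x - P x)"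
    using assms(2) unfolding quasi_projection_pair_def Let_def by (elim conjE) assumption
  note Q = Q1 Q2 Q3 Q4 Q5
  have adjP0: "\<And>x y. ip (P x) y = ip x (adjoint ip P y)"
    using Q(1) unfolding is_projection_def by (blast intro: adjoint_prop)
  have adjP: "\<And>x y. ip (P x) y = ip x (P y)"
    using adjP0 Q(1) unfolding is_projection_def by simp
  have PPf: "P \<circ> P = P" using Q(1) unfolding is_projection_def by blast
  have PP: "\<And>x. P (P x) = P x"
  proof - fix x show "P (P x) = P x" using fun_cong[OF PPf, of x] by simp qed
  have adjQ: "\<And>x y. ip (Q x) y = ip x (adjoint ip Q y)"
    using Q(2) unfolding is_idempotent_def by (blast intro: adjoint_prop)
  have c0: "\<And>x. P (adjoint ip Q (P x)) = P (Q (P x))"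
  proof - fix x show "P (adjoint ip Q (P x)) = P (Q (P x))" using fun_cong[OF Q(3), of x] by simp qed
  have c1: "\<And>x. P (adjoint ip Q (x - P x)) = - P (Q (x - P x))"
  proof - fix x show "P (adjoint ip Q (x - P x)) = - P (Q (x - P x))" using fun_cong[OF Q(4), of x] by simp qed
  have c2: "\<And>x. adjoint ip Q (x - P x) - P (adjoint ip Q (x - P x)) = Q (x - P x) - P (Q (x - P x))"
  proof - fix x show "adjoint ip Q (x - P x) - P (adjoint ip Q (x - P x)) = Q (x - P x) - P (Q (x - P x))"
    using fun_cong[OF Q(5), of x] by simp qed
  note M = main[OF adjP adjQ PP c0 c1 c2]
  show ?thesis unfolding closure_zero using M by blast
qed

end
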